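(* There is a constant $C>0$ such that for all $\boldsymbol{m}=(m_1,m_2)\in\mathbb{N}^2$ the Lebesgue constant of interpolation in $\Pi_\square$ on the rhodonea nodes satisfies \[\Lambda^{(\boldsymbol{m})}_\square:=\sup_{\mathscr{f}\in C(\mathbb{D}),\ \|\mathscr{f}\|_\infty\le1}\ \sup_{(r,\theta)\in[0,1]\times[-\pi,\pi]}|P_f(r,\theta)|\ \le\ C\ln(m_1+1)\ln(m_2+1),\] where $P_f$ denotes the unique function in $\Pi_\square$ with $P_f(r_{i_1},\theta_{i_2})=\mathscr{f}(r_{i_1},\theta_{i_2})$ for all $\boldsymbol{i}\in\mathrm{I}^{(\boldsymbol{m})}$.
   Context: Polar coordinates $(r,\theta)\in[0,1]\times[-\pi,\pi]$ on the unit disk; $C(\mathbb{D})$ is the set of continuous $\mathscr{f}$ on $[0,1]\times[-\pi,\pi]$ with $\mathscr{f}(r,-\pi)=\mathscr{f}(r,\pi)$ and $\mathscr{f}(0,\theta)$ independent of $\theta$; $\|\mathscr{f}\|_\infty=\sup_{(r,\theta)}|\mathscr{f}(r,\theta)|$. $\mathrm{I}^{(\boldsymbol{m})}=\{(i_1,i_2)\in\mathbb{Z}^2:\ 0\le i_1\le m_1,\ -2m_2<i_2\le 2m_2,\ i_2\le0\text{ if }i_1=m_1,\ i_1+i_2\text{ even}\}$, $r_{i_1}=\cos\!\big(\frac{i_1\pi}{2m_1}\big)$, $\theta_{i_2}=\frac{i_2\pi}{2m_2}$. $\Pi_\square=\mathrm{span}\{X_{\boldsymbol{\gamma}}:\boldsymbol{\gamma}\in\Gamma_\square\}$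 with $X_{\boldsymbol{\gamma}}(r,\theta)=T_{\gamma_1}(r)e^{\mathrm{i}\gamma_2\theta}$, $T_n(r)=\cos(n\arccos r)$, and $\Gamma_\square=\{\boldsymbol{\gamma}\in\mathbb{Z}^2: 0\le\gamma_1\le2m_1,\ -m_2<\gamma_2\le m_2,\ \gamma_1+\gamma_2\text{ even}\}$; the interpolation problem in $\Pi_\square$ on these nodes is uniquely solvable. *)

theory Defs
  imports "HOL-Analysis.Analysis"
begin

definition cheb :: "nat \<Rightarrow> real \<Rightarrow> real" where
  "cheb n r = cos (real n * arccos r)"

definition node_idx :: "nat \<Rightarrow> nat \<Rightarrow> (nat \<times> int) set" where
  "node_idx m1 m2 = {(i1, i2). i1 \<le> m1 \<and> - 2 * int m2 < i2 \<and> i2 \<le> 2 * int m2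
      \<and> (i1 = m1 \<longrightarrow> i2 \<le> 0) \<and> even (int i1 + i2)}"

definition node_r :: "nat \<Rightarrow> nat \<Rightarrow> real" where
  "node_r m1 i1 = cos (real i1 * pi / (2 * real m1))"

definition node_theta :: "nat \<Rightarrow> int \<Rightarrow> real" where
  "node_theta m2 i2 = real_of_int i2 * pi / (2 * real m2)"

definition Gamma_sq :: "nat \<Rightarrow> nat \<Rightarrow> (nat \<times> int) set" where
  "Gamma_sq m1 m2 = {(g1, g2). g1 \<le> 2 * m1 \<and> - int m2 < g2 \<and> g2 \<le> int m2
      \<and> even (int g1 + g2)}"

definition Xfun :: "nat \<times> int \<Rightarrow> real \<Rightarrow> real \<Rightarrow> complex" where
  "Xfun g r \<theta> = complex_of_real (cheb (fst g) r) * exp (\<i> * of_int (snd g) * complex_of_real \<theta>)"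

definition Pi_sq :: "nat \<Rightarrow> nat \<Rightarrow> (real \<Rightarrow> real \<Rightarrow> complex) set" where
  "Pi_sq m1 m2 = {p. \<exists>c :: nat \<times> int \<Rightarrow> complex.
      p = (\<lambda>r \<theta>. \<Sum>g\<in>Gamma_sq m1 m2. c g * Xfun g r \<theta>)}"

definition polar_dom :: "(real \<times> real) set" where
  "polar_dom = {0..1} \<times> {-pi..pi}"

text \<open>C(D): continuous functions in polar coordinates, 2pi-periodic in theta and
  independent of theta at r = 0.\<close>
definition C_disk :: "(real \<Rightarrow> real \<Rightarrow> complex) set" where
  "C_disk = {f. continuous_on polar_dom (\<lambda>(r, \<theta>). f r \<theta>)
      \<and> (\<forall>r\<in>{0..1}. f r (-pi) = f r pi)
      \<and> (\<forall>\<theta>\<in>{-pi..pi}. \<forall>\<theta>'\<in>{-pi..pi}. f 0 \<theta> = f 0 \<theta>')}"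

definition sup_norm_le :: "(real \<Rightarrow> real \<Rightarrow> complex) \<Rightarrow> real \<Rightarrow> bool" where
  "sup_norm_le f b \<longleftrightarrow> (\<forall>(r, \<theta>)\<in>polar_dom. cmod (f r \<theta>) \<le> b)"

end

theory Submission
  imports Defs
begin

lemma root_sum:
  fixes n :: nat and d :: int
  assumes n: "n > 0"
  shows "(\<Sum>a<n. cis (of_int d * real a * (2*pi/n))) = (if int n dvd d then of_nat n else 0)"
proof -
  define w where "w = cis (of_int d * (2*pi/n))"
  have pw: "cis (of_int d * real a * (2*pi/n)) = w ^ a" for a
  proof -
    have "w ^ a = cis (real a * (of_int d * (2*pi/n)))" unfolding w_def by (rule Complex.DeMoivre)
    moreover have "real a * (of_int d * (2*pi/n)) = of_int d * real a * (2*pi/n)" by simp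
    ultimately show ?thesis by metis
  qed
  have wn: "w ^ n = 1"
  proof -
    have "w ^ n = cis (2 * pi * of_int d)" unfolding w_def Complex.DeMoivre using n
      by (simp add: field_simps)
    also have "\<dots> = 1" by (rule cis_multiple_2pi) simp
    finally show ?thesis .
  qed
  show ?thesis
  proof (cases "int n dvd d")
    case True
    then obtain k where k: "d = int n * k" by blast
    have "w = cis (2 * pi * of_int k)" unfolding w_def k using n by (simp add: field_simps)
    also have "\<dots> = 1" by (rule cis_multiple_2pi) simp
    finally have "w = 1" .
    then show ?thesis using True by (simp only: pw) simp
  next
    case False
    have "w \<noteq> 1"
    proof
      assume "w = 1"
      hence "exp (\<i> * complex_of_real (of_int d * (2*pi/n))) = 1" unfolding w_def cis_conv_exp .
      then obtain m :: int where m: "of_int d * (2*pi/n) = of_int (2*m) * pi"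
        unfolding exp_eq_1 by auto
      hence "of_int d = real n * of_int m" using n by (simp add: field_simps)
      hence "d = int n * m" by (metis of_int_eq_iff of_int_mult of_int_of_nat_eq)
      thus False using False by simp
    qed
    hence "(\<Sum>a<n. w ^ a) = (w ^ n - 1) / (w - 1)" by (rule geometric_sum)
    also have "\<dots> = 0" using wn by simp
    finally show ?thesis using False by (simp only: pw) simp
  qed
qed

definition kk :: "nat \<Rightarrow> nat \<Rightarrow> int" where "kk L i = int i + 1 - int L"

definition DK :: "nat \<Rightarrow> real \<Rightarrow> complex" where
  "DK L z = (\<Sum>i<2*L. cis (of_int (kk L i) * z))"

lemma orth:
  fixes n :: nat and j :: int
  assumes n: "n > 0" and h: "h = 2*pi/n"
  shows "(\<Sum>a<n. cis (of_int j * real a * h) * DK L (x - real a * h)) =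
     (\<Sum>i<2*L. cis (of_int (kk L i) * x) * (if int n dvd (j - kk L i) then of_nat n else 0))"
proof -
  have "(\<Sum>a<n. cis (of_int j * real a * h) * DK L (x - real a * h)) =
     (\<Sum>a<n. \<Sum>i<2*L. cis (of_int (kk L i) * x) * cis (of_int (j - kk L i) * real a * (2*pi/n)))"
    unfolding DK_def sum_distrib_left
    by (intro sum.cong refl) (simp add: cis_mult h algebra_simps)
  also have "\<dots> = (\<Sum>i<2*L. cis (of_int (kk L i) * x) * (\<Sum>a<n. cis (of_int (j - kk L i) * real a * (2*pi/n))))"
    by (subst sum.swap) (simp add: sum_distrib_left)
  also have "\<dots> = (\<Sum>i<2*L. cis (of_int (kk L i) * x) * (if int n dvd (j - kk L i) then of_nat n else 0))"
    by (simp only: root_sum[OF n])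
  finally show ?thesis .
qed

lemma dvd_small0: "(0::int) < n \<Longrightarrow> \<bar>d\<bar> < n \<Longrightarrow> n dvd d \<Longrightarrow> d = 0"
proof -
  assume a: "(0::int) < n" "\<bar>d\<bar> < n" "n dvd d"
  then obtain k where k: "d = n * k" by blast
  show "d = 0"
  proof (rule ccontr)
    assume "d \<noteq> 0"
    hence "k \<noteq> 0" using k by simp
    hence "1 \<le> \<bar>k\<bar>" by simp
    hence "n * 1 \<le> n * \<bar>k\<bar>" using a by (intro mult_left_mono) auto
    hence "n \<le> \<bar>d\<bar>" using k a by (simp add: abs_mult)
    thus False using a by simp
  qed
qed

lemma orth_a:
  assumes "2*L \<le> n" "1 - int L \<le> g" "g \<le> int L" "n > 0"
  shows "(\<Sum>i<2*L. cis (of_int (kk L i) * x) * (if int n dvd (g - kk L i) then of_nat n else (0::complex)))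
     = of_nat n * cis (of_int g * x)"
proof -
  define i0 where "i0 = nat (g + int L - 1)"
  have i0: "i0 < 2*L" "kk L i0 = g" using assms by (auto simp: i0_def kk_def)
  have "(\<Sum>i<2*L. cis (of_int (kk L i) * x) * (if int n dvd (g - kk L i) then of_nat n else (0::complex)))
     = (\<Sum>i<2*L. if i = i0 then of_nat n * cis (of_int g * x) else 0)"
  proof (intro sum.cong refl)
    fix i assume i: "i \<in> {..<2*L}"
    have "int n dvd (g - kk L i) \<longleftrightarrow> i = i0"
    proof
      assume "int n dvd (g - kk L i)"
      moreover have "\<bar>g - kk L i\<bar> < int n" using assms i by (auto simp: kk_def)
      ultimately have "g - kk L i = 0" using dvd_small0[of "int n" "g - kk L i"] assms by linarith
      thus "i = i0" using i0 by (auto simp: kk_def)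
    qed (use i0 in auto)
    thus "cis (of_int (kk L i) * x) * (if int n dvd (g - kk L i) then of_nat n else 0) =
        (if i = i0 then of_nat n * cis (of_int g * x) else 0)" using i0 by auto
  qed
  also have "\<dots> = of_nat n * cis (of_int g * x)" using i0 by simp
  finally show ?thesis .
qed

lemma orth_b:
  assumes "n = 2*L" "L > 0"
  shows "(\<Sum>i<2*L. cis (of_int (kk L i) * x) * (if int n dvd (- int L - kk L i) then of_nat n else (0::complex)))
     = of_nat n * cis (of_int L * x)"
proof -
  define i0 where "i0 = 2*L - 1"
  have i0: "i0 < 2*L" "kk L i0 = int L" using assms by (auto simp: i0_def kk_def)
  have "(\<Sum>i<2*L. cis (of_int (kk L i) * x) * (if int n dvd (- int L - kk L i) then of_nat n else (0::complex)))
     = (\<Sum>i<2*L. if i = i0 then of_nat n * cis (of_int L * x) else 0)"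
  proof (intro sum.cong refl)
    fix i assume i: "i \<in> {..<2*L}"
    have "int n dvd (- int L - kk L i) \<longleftrightarrow> i = i0"
    proof
      assume "int n dvd (- int L - kk L i)"
      hence d: "int n dvd (- int L - kk L i + int n)" by simp
      have "\<bar>- int L - kk L i + int n\<bar> < int n" using assms i by (auto simp: kk_def)
      hence "- int L - kk L i + int n = 0" using dvd_small0[of "int n" "- int L - kk L i + int n"] d assms by linarith
      thus "i = i0" using assms by (auto simp: kk_def i0_def)
    next
      assume "i = i0" thus "int n dvd (- int L - kk L i)" using assms
        by (auto simp: kk_def i0_def)
    qed
    thus "cis (of_int (kk L i) * x) * (if int n dvd (- int L - kk L i) then of_nat n else 0) =
        (if i = i0 then of_nat n * cis (of_int L * x) else 0)" using i0 by auto
  qed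
  also have "\<dots> = of_nat n * cis (of_int L * x)" using i0 by simp
  finally show ?thesis .
qed

lemma orth_c:
  assumes "n = 4*L" "int L < g" "g \<le> 3 * int L"
  shows "(\<Sum>i<2*L. cis (of_int (kk L i) * x) * (if int n dvd (g - kk L i) then of_nat n else (0::complex))) = 0"
proof (intro sum.neutral ballI)
  fix i assume i: "i \<in> {..<2*L}"
  have "\<not> int n dvd (g - kk L i)"
  proof
    assume "int n dvd (g - kk L i)"
    moreover have "0 < g - kk L i" "g - kk L i < int n" using assms i by (auto simp: kk_def)
    ultimately show False using zdvd_not_zless by blast
  qed
  thus "cis (of_int (kk L i) * x) * (if int n dvd (g - kk L i) then of_nat n else 0) = 0" by simp
qed

lemma DK_le_card: "norm (DK L z) \<le> 2 * real L"
proof -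
  have "norm (DK L z) \<le> (\<Sum>i<2*L. norm (cis (of_int (kk L i) * z)))"
    unfolding DK_def by (rule norm_sum)
  also have "\<dots> = 2 * real L" by simp
  finally show ?thesis .
qed

lemma cis_minus_one: "norm (cis z - 1) = 2 * \<bar>sin (z/2)\<bar>"
proof -
  have "cis z - 1 = cis (z/2) * (cis (z/2) - cis (-(z/2)))"
    by (simp add: algebra_simps cis_mult)
  also have "cis (z/2) - cis (-(z/2)) = Complex 0 (2 * sin (z/2))"
    by (simp add: cis.ctr complex_eq_iff)
  finally have "norm (cis z - 1) = norm (Complex 0 (2 * sin (z/2)))" by (simp add: norm_mult)
  also have "\<dots> = sqrt ((2 * sin (z/2))^2)" by (simp add: norm_complex_def)
  also have "\<dots> = 2 * \<bar>sin (z/2)\<bar>" by (simp only: real_sqrt_abs)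
  finally show ?thesis .
qed

lemma DK_le_sin:
  assumes "sin (z/2) \<noteq> 0"
  shows "norm (DK L z) \<le> 1 / \<bar>sin (z/2)\<bar>"
proof -
  define w where "w = cis z"
  have w1: "w \<noteq> 1"
  proof
    assume "w = 1"
    hence "norm (cis z - 1) = 0" by (simp add: w_def)
    thus False using assms cis_minus_one[of z] by simp
  qed
  have "DK L z = cis ((1 - of_int (int L)) * z) * (\<Sum>i<2*L. w ^ i)"
    unfolding DK_def sum_distrib_left w_def
  proof (intro sum.cong refl)
    fix i
    have "cis z ^ i = cis (real i * z)" by (rule Complex.DeMoivre)
    thus "cis (of_int (kk L i) * z) = cis ((1 - of_int (int L)) * z) * cis z ^ i"
      by (simp add: cis_mult kk_def algebra_simps)
  qed
  hence "norm (DK L z) = norm (\<Sum>i<2*L. w ^ i)" by (simp add: norm_mult)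
  also have "(\<Sum>i<2*L. w ^ i) = (w ^ (2*L) - 1) / (w - 1)" using w1 by (rule geometric_sum)
  also have "norm \<dots> = norm (w ^ (2*L) - 1) / norm (w - 1)" by (simp add: norm_divide)
  also have "\<dots> \<le> 2 / norm (w - 1)"
  proof (rule divide_right_mono)
    have "norm (w ^ (2*L) - 1) \<le> norm (w ^ (2*L)) + norm (1::complex)" by (rule norm_triangle_ineq4)
    also have "\<dots> = 2" by (simp add: w_def norm_power)
    finally show "norm (w ^ (2*L) - 1) \<le> 2" .
  qed simp
  also have "\<dots> = 1 / \<bar>sin (z/2)\<bar>" by (simp add: w_def cis_minus_one)
  finally show ?thesis .
qed

lemma sin_ge_half:
  assumes "0 \<le> v" "v \<le> pi/2"
  shows "v/2 \<le> sin v"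
proof (cases "v \<le> pi/3")
  case True
  have "(\<lambda>u. sin u - u/2) 0 \<le> (\<lambda>u. sin u - u/2) v"
  proof (rule DERIV_nonneg_imp_nondecreasing[OF assms(1)])
    fix u assume u: "0 \<le> u" "u \<le> v"
    have "cos (pi/3) \<le> cos u"
      by (rule cos_monotone_0_pi_le) (use u True in auto)
    hence "0 \<le> cos u - 1/2" by (simp add: cos_60)
    moreover have "DERIV (\<lambda>u. sin u - u/2) u :> cos u - 1/2"
      by (auto intro!: derivative_eq_intros)
    ultimately show "\<exists>y. DERIV (\<lambda>u. sin u - u/2) u :> y \<and> 0 \<le> y" by blast
  qed
  thus ?thesis by simp
next
  case False
  have "sin (pi/3) \<le> sin v"
    by (rule sin_monotone_2pi_le) (use False assms in auto)
  hence s: "sqrt 3 / 2 \<le> sin v" by (simp add: sin_60)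
  have "1.7 \<le> sqrt 3" by (rule real_le_rsqrt) (simp add: power2_eq_square)
  moreover have "pi \<le> 3.2" using pi_approx by simp
  ultimately show ?thesis using s assms by linarith
qed

lemma sin_ge_min:
  assumes "0 \<le> v" "v \<le> pi"
  shows "min v (pi - v) / 2 \<le> sin v"
proof (cases "v \<le> pi/2")
  case True
  thus ?thesis using sin_ge_half[of v] assms by (simp add: min_def)
next
  case False
  have "(pi - v)/2 \<le> sin (pi - v)" using sin_ge_half[of "pi - v"] assms False by simp
  thus ?thesis by (simp add: min_def)
qed

lemma harm_le1: "1 \<le> M \<Longrightarrow> (\<Sum>j=1..M. 1 / real j) \<le> 1 + ln (real M)"
proof (induction M rule: dec_induct)
  case base thus ?case by simp
next
  case (step M)
  have "ln (real M / real (Suc M)) \<le> real M / real (Suc M) - 1"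
    using step by (intro ln_le_minus_one) simp
  also have "\<dots> = - (1 / real (Suc M))" by (simp add: field_simps)
  finally have "1 / real (Suc M) \<le> ln (real (Suc M)) - ln (real M)"
    using step by (simp add: ln_div)
  thus ?case using step by simp
qed

lemma harm_le2: assumes n: "2 \<le> n" shows "(\<Sum>j=1..n-2. 1 / real j) \<le> 1 + ln (real n)"
proof (cases "n - 2 = 0")
  case True thus ?thesis using ln_ge_zero[of "real n"] n by simp
next
  case False
  have "(\<Sum>j=1..n-2. 1 / real j) \<le> 1 + ln (real (n-2))" using False by (intro harm_le1) simp
  also have "ln (real (n-2)) \<le> ln (real n)" using False by (intro ln_mono) auto
  finally show ?thesis by simp
qed

lemma abs_sin_shift: "\<bar>sin (v + of_int s * pi)\<bar> = \<bar>sin v\<bar>"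
proof -
  have "sin (of_int s * pi) = 0" by (simp add: sin_zero_iff_int2)
  moreover have "\<bar>cos (of_int s * pi)\<bar> = 1"
  proof -
    have "(sin (of_int s * pi))^2 + (cos (of_int s * pi))^2 = 1" by (rule sin_cos_squared_add)
    with \<open>sin (of_int s * pi) = 0\<close> have "(cos (of_int s * pi))^2 = 1" by simp
    thus ?thesis by (simp add: power2_eq_1_iff abs_if) (auto simp: power2_eq_1_iff)
  qed
  ultimately show ?thesis by (simp add: sin_add abs_mult)
qed

lemma inv_min_le: "0 < a \<Longrightarrow> 0 < b \<Longrightarrow> 1 / min a b \<le> 1/a + 1/(b::real)"
  by (simp add: min_def)

lemma leb1:
  fixes F :: "real \<Rightarrow> real" and n :: nat
  assumes n: "2 \<le> n" and F0: "\<And>z. 0 \<le> F z" and Fn: "\<And>z. F z \<le> real n"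
    and Fs: "\<And>z. sin (z/2) \<noteq> 0 \<Longrightarrow> F z \<le> 1 / \<bar>sin (z/2)\<bar>"
  shows "(\<Sum>a<n. F (x - real a * (2*pi/n))) \<le> real n * (4 + 2 * ln (real n))"
proof -
  define h where "h = 2*pi/n"
  have hpos: "h > 0" using n by (simp add: h_def)
  have nh: "real n * h = 2 * pi" using n by (simp add: h_def)
  define q where "q = \<lfloor>x / h\<rfloor>"
  define t where "t = x - of_int q * h"
  have t0: "0 \<le> t" and th: "t < h"
  proof -
    have "of_int q \<le> x / h" "x / h < of_int q + 1" unfolding q_def by linarith+
    thus "0 \<le> t" "t < h" using hpos by (auto simp: t_def field_simps)
  qed
  define jf where "jf a = nat ((q - int a) mod int n)" for a :: nat
  define G where "G j = (if j = 0 \<or> j = n - 1 then real n else real n * (1 / real j + 1 / real (n - 1 - j)))" for j :: nat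
  have jfn: "jf a < n" for a using n by (simp add: jf_def nat_less_iff)
  have key: "F (x - real a * h) \<le> G (jf a)" for a
  proof -
    define j where "j = jf a"
    define s where "s = (q - int a) div int n"
    have qa: "q - int a = int j + int n * s"
      unfolding j_def jf_def s_def using n by simp
    have xa: "x - real a * h = t + real j * h + 2 * pi * of_int s"
    proof -
      have "x - real a * h = t + of_int (q - int a) * h" by (simp add: t_def algebra_simps)
      also have "\<dots> = t + real j * h + of_int s * (real n * h)" unfolding qa
        by (simp add: algebra_simps)
      finally show ?thesis using nh by simp
    qed
    show ?thesis
    proof (cases "j = 0 \<or> j = n - 1")
      case True thus ?thesis using Fn by (simp add: G_def j_def)
    next
      case False
      hence j1: "1 \<le> j" "j \<le> n - 2" using jfn[of a] by (auto simp: j_def)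
      define v where "v = (t + real j * h) / 2"
      have half: "(x - real a * h) / 2 = v + of_int s * pi"
      proof -
        have "(x - real a * h) / 2 = (t + real j * h + 2 * pi * of_int s) / 2" by (simp only: xa)
        also have "\<dots> = v + of_int s * pi" by (simp add: v_def field_simps)
        finally show ?thesis .
      qed
      have v1: "real j * pi / n \<le> v" using t0 n by (simp add: v_def h_def field_simps)
      have v2: "pi - v \<ge> real (n - 1 - j) * pi / n"
      proof -
        have "v < (real j + 1) * h / 2" using th by (simp add: v_def field_simps)
        also have "\<dots> = (real j + 1) * pi / n" by (simp add: h_def)
        finally have "v < (real j + 1) * pi / n" .
        moreover have "real (n - 1 - j) = real n - 1 - real j" using j1 n by simp
        moreover have "pi = real n * pi / n" using n by simp
        ultimately show ?thesis by (simp add: field_simps)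
      qed
      have jp: "0 < real j * pi / n" using j1 n by simp
      have kp: "0 < real (n - 1 - j) * pi / n" using j1 n by simp
      have vpos: "0 \<le> v" "v \<le> pi" using v1 v2 jp kp by linarith+
      have mpos: "0 < min v (pi - v)" using v1 v2 jp kp by (simp only: min_def split: if_split) linarith
      have sv: "min v (pi - v) / 2 \<le> sin v" by (rule sin_ge_min) (use vpos in auto)
      have sabs: "\<bar>sin ((x - real a * h) / 2)\<bar> = sin v"
        by (simp only: half abs_sin_shift) (use sv mpos sin_gt_zero[of v] in auto)
      hence snz: "sin ((x - real a * h) / 2) \<noteq> 0" using sv mpos by auto
      have "F (x - real a * h) \<le> 1 / sin v" using Fs[OF snz] sabs by simp
      also have "\<dots> \<le> 1 / (min v (pi - v) / 2)"
        using sv mpos by (intro divide_left_mono) auto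
      also have "\<dots> \<le> 1 / (min (real j * pi / n) (real (n - 1 - j) * pi / n) / 2)"
      proof (rule divide_left_mono)
        have mm: "min (real j * pi / n) (real (n - 1 - j) * pi / n) \<le> min v (pi - v)"
          using v1 v2 by (rule min.mono)
        thus "min (real j * pi / n) (real (n - 1 - j) * pi / n) / 2 \<le> min v (pi - v) / 2" by simp
        have "0 < min (real j * pi / n) (real (n - 1 - j) * pi / n)" using jp kp by (auto simp only: min_def split: if_split)
        thus "0 < min v (pi - v) / 2 * (min (real j * pi / n) (real (n - 1 - j) * pi / n) / 2)"
          using mpos by simp
      qed simp
      also have "\<dots> = (2 / pi) * real n * (1 / min (real j) (real (n - 1 - j)))"
        using n by (simp add: min_def field_simps)
      also have "\<dots> \<le> 1 * real n * (1 / real j + 1 / real (n - 1 - j))"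
      proof (intro mult_mono)
        show "2 / pi \<le> 1" using pi_ge_two by simp
        show "1 / min (real j) (real (n - 1 - j)) \<le> 1 / real j + 1 / real (n - 1 - j)"
          by (rule inv_min_le) (use j1 n in auto)
      qed auto
      also have "\<dots> = G j" using False by (simp add: G_def)
      finally show ?thesis by (simp add: j_def)
    qed
  qed
  have "(\<Sum>a<n. F (x - real a * (2*pi/n))) \<le> (\<Sum>a<n. G (jf a))"
    using key by (intro sum_mono) (simp add: h_def)
  also have "(\<Sum>a<n. G (jf a)) = (\<Sum>j<n. G j)"
  proof (rule sum.reindex_bij_witness[where j = jf and i = "\<lambda>b. nat ((q - int b) mod int n)"])
    fix a assume a: "a \<in> {..<n}"
    have "(q - (q - int a) mod int n) mod int n = (q - (q - int a)) mod int n" by (rule mod_diff_right_eq)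
    also have "\<dots> = int a" using a by simp
    finally show "nat ((q - int (jf a)) mod int n) = a" using n by (simp add: jf_def)
    show "jf a \<in> {..<n}" using jfn by simp
  next
    fix b assume b: "b \<in> {..<n}"
    have "(q - (q - int b) mod int n) mod int n = (q - (q - int b)) mod int n" by (rule mod_diff_right_eq)
    also have "\<dots> = int b" using b by simp
    finally show "jf (nat ((q - int b) mod int n)) = b" using n by (simp add: jf_def)
    show "nat ((q - int b) mod int n) \<in> {..<n}" using n by (simp add: nat_less_iff)
  qed simp
  also have "(\<Sum>j<n. G j) \<le> (\<Sum>j<n. (if j = 0 then real n else 0) + (if j = n - 1 then real n else 0)
      + (if j \<in> {1..n-2} then real n * (1 / real j + 1 / real (n - 1 - j)) else 0))"
  proof (intro sum_mono)
    fix j assume "j \<in> {..<n}"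
    thus "G j \<le> (if j = 0 then real n else 0) + (if j = n - 1 then real n else 0)
      + (if j \<in> {1..n-2} then real n * (1 / real j + 1 / real (n - 1 - j)) else 0)"
      using n by (auto simp: G_def)
  qed
  also have "\<dots> = real n + real n + (\<Sum>j\<in>{1..n-2}. real n * (1 / real j + 1 / real (n - 1 - j)))"
  proof -
    have e: "{..<n} \<inter> {1..n-2} = {1..n-2}" using n by auto
    have "(\<Sum>j<n. (if j \<in> {1..n-2} then real n * (1 / real j + 1 / real (n - 1 - j)) else 0))
       = (\<Sum>j\<in>{..<n} \<inter> {1..n-2}. real n * (1 / real j + 1 / real (n - 1 - j)))"
      by (rule sum.inter_restrict[symmetric]) simp
    hence r: "(\<Sum>j<n. (if j \<in> {1..n-2} then real n * (1 / real j + 1 / real (n - 1 - j)) else 0))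
       = (\<Sum>j\<in>{1..n-2}. real n * (1 / real j + 1 / real (n - 1 - j)))" by (simp only: e)
    have "(\<Sum>j<n. (if j = n - 1 then real n else 0)) = real n" using n by simp
    moreover have "(\<Sum>j<n. (if j = 0 then real n else 0)) = real n" using n by simp
    ultimately show ?thesis by (simp only: sum.distrib r)
  qed
  also have "(\<Sum>j\<in>{1..n-2}. real n * (1 / real j + 1 / real (n - 1 - j))) =
      real n * ((\<Sum>j\<in>{1..n-2}. 1 / real j) + (\<Sum>j\<in>{1..n-2}. 1 / real (n - 1 - j)))"
    by (simp only: sum_distrib_left[symmetric] sum.distrib)
  also have "(\<Sum>j\<in>{1..n-2}. 1 / real (n - 1 - j)) = (\<Sum>j\<in>{1..n-2}. 1 / real j)"
  proof -
    have "(\<Sum>j\<in>{1..n-2}. 1 / real j) = (\<Sum>j\<in>{1..n-2}. 1 / real (n - 2 + 1 - j))"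
      by (rule sum.atLeastAtMost_rev)
    also have "\<dots> = (\<Sum>j\<in>{1..n-2}. 1 / real (n - 1 - j))"
      using n by (intro sum.cong refl) (simp add: algebra_simps)
    finally show ?thesis by simp
  qed
  also have "real n + real n + real n * ((\<Sum>j\<in>{1..n-2}. 1 / real j) + (\<Sum>j\<in>{1..n-2}. 1 / real j))
      \<le> real n + real n + real n * ((1 + ln (real n)) + (1 + ln (real n)))"
    using harm_le2[OF n] by (intro add_left_mono mult_left_mono add_mono) auto
  also have "\<dots> = real n * (4 + 2 * ln (real n))" by (simp add: algebra_simps)
  finally show ?thesis .
qed

definition bas :: "nat \<times> int \<Rightarrow> real \<Rightarrow> real \<Rightarrow> complex" where
  "bas g \<phi> \<theta> = complex_of_real (cos (real (fst g) * \<phi>)) * exp (\<i> * of_int (snd g) * complex_of_real \<theta>)"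

lemma exp_cis: "exp (\<i> * of_int k * complex_of_real \<theta>) = cis (of_int k * \<theta>)"
  by (simp add: cis_conv_exp mult.assoc)

lemma of_real_cos_cis: "complex_of_real (cos t) = (cis t + cis (- t)) / 2"
  by (simp add: complex_eq_iff)

lemma I1:
  fixes m1 g1 :: nat
  assumes m1: "m1 > 0" and g1: "g1 \<le> 2*m1"
  shows "(\<Sum>a<4*m1. cos (real g1 * (real a * (pi/(2*m1)))) * Re (DK (2*m1) (\<phi> - real a * (pi/(2*m1)))))
    = real (4*m1) * cos (real g1 * \<phi>)"
proof -
  define n where "n = 4*m1"
  define h where "h = 2*pi/n"
  have n0: "n > 0" using m1 by (simp add: n_def)
  have hh: "pi/(2*m1) = h" using m1 by (simp add: h_def n_def)
  define T where "T = (\<Sum>a<n. cis (of_int (- int g1) * real a * h) * DK (2*m1) (\<phi> - real a * h))"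
  have "(\<Sum>a<n. complex_of_real (cos (real g1 * (real a * h))) * DK (2*m1) (\<phi> - real a * h))
      = (\<Sum>a<n. (cis (of_int (int g1) * real a * h) * DK (2*m1) (\<phi> - real a * h)
                + cis (of_int (- int g1) * real a * h) * DK (2*m1) (\<phi> - real a * h)) / 2)"
    by (intro sum.cong refl) (simp add: of_real_cos_cis algebra_simps add_divide_distrib)
  also have "\<dots> = ((\<Sum>a<n. cis (of_int (int g1) * real a * h) * DK (2*m1) (\<phi> - real a * h))
                + T) / 2"
    unfolding T_def by (simp only: sum.distrib sum_divide_distrib[symmetric])
  also have "(\<Sum>a<n. cis (of_int (int g1) * real a * h) * DK (2*m1) (\<phi> - real a * h))
       = of_nat n * cis (of_int (int g1) * \<phi>)"
    unfolding orth[OF n0 h_def] by (rule orth_a) (use g1 m1 in \<open>auto simp: n_def\<close>)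
  finally have S: "(\<Sum>a<n. complex_of_real (cos (real g1 * (real a * h))) * DK (2*m1) (\<phi> - real a * h))
      = (of_nat n * cis (of_int (int g1) * \<phi>) + T) / 2" .
  have RT: "Re T = real n * cos (real g1 * \<phi>)"
  proof (cases "g1 = 2*m1")
    case True
    have "T = of_nat n * cis (of_int (int (2*m1)) * \<phi>)"
      unfolding T_def orth[OF n0 h_def] True by (rule orth_b) (use m1 in \<open>auto simp: n_def\<close>)
    thus ?thesis using True by simp
  next
    case False
    have "T = of_nat n * cis (of_int (- int g1) * \<phi>)"
      unfolding T_def orth[OF n0 h_def] by (rule orth_a) (use g1 False in \<open>auto simp: n_def\<close>)
    thus ?thesis by simp
  qed
  have "Re (\<Sum>a<n. complex_of_real (cos (real g1 * (real a * h))) * DK (2*m1) (\<phi> - real a * h))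
      = real n * cos (real g1 * \<phi>)"
    unfolding S using RT by simp
  moreover have "Re (\<Sum>a<n. complex_of_real (cos (real g1 * (real a * h))) * DK (2*m1) (\<phi> - real a * h))
     = (\<Sum>a<n. cos (real g1 * (real a * h)) * Re (DK (2*m1) (\<phi> - real a * h)))"
    unfolding Re_sum by (intro sum.cong refl) simp
  ultimately show ?thesis unfolding hh n_def by simp
qed

lemma I2:
  fixes m2 :: nat and g2 :: int
  assumes m2: "m2 > 0" and g2: "- int m2 < g2" "g2 \<le> int m2"
  shows "(\<Sum>b<4*m2. cis (of_int g2 * real b * (pi/(2*m2))) * DK m2 (\<theta> - real b * (pi/(2*m2))))
    = of_nat (4*m2) * cis (of_int g2 * \<theta>)"
proof -
  have n0: "4*m2 > 0" using m2 by simp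
  have hh: "pi/(2*m2) = 2*pi/real (4*m2)" using m2 by simp
  show ?thesis unfolding hh orth[OF n0 refl] by (rule orth_a) (use g2 in auto)
qed

lemma I3:
  fixes m2 :: nat and g2 :: int
  assumes m2: "m2 > 0" and g2: "- int m2 < g2" "g2 \<le> int m2"
  shows "(\<Sum>b<4*m2. (-1)^b * cis (of_int g2 * real b * (pi/(2*m2))) * DK m2 (\<theta> - real b * (pi/(2*m2))))
    = 0"
proof -
  have n0: "4*m2 > 0" using m2 by simp
  have hh: "pi/(2*m2) = 2*pi/real (4*m2)" using m2 by simp
  have e: "(-1)^b * cis (of_int g2 * real b * (pi/(2*m2))) = cis (of_int (g2 + 2 * int m2) * real b * (pi/(2*m2)))" for b
  proof -
    have "cis (of_int (g2 + 2 * int m2) * real b * (pi/(2*m2))) = cis (real b * pi) * cis (of_int g2 * real b * (pi/(2*m2)))"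
      using m2 by (simp add: cis_mult field_simps)
    also have "cis (real b * pi) = (-1)^b" by (simp add: cis.ctr complex_eq_iff)
    finally show ?thesis by simp
  qed
  show ?thesis unfolding e unfolding hh orth[OF n0 refl] by (rule orth_c) (use g2 in auto)
qed

definition ev_ind :: "nat \<Rightarrow> nat \<Rightarrow> real" where
  "ev_ind a b = (if even (a + b) then 1 else 0)"

lemma ev_ind2: "2 * complex_of_real (ev_ind a b) = 1 + (-1)^a * (-1)^b"
  by (cases "even a"; cases "even b") (auto simp: ev_ind_def)

lemma rep_bas:
  fixes m1 m2 g1 :: nat and g2 :: int
  assumes m1: "m1 > 0" and m2: "m2 > 0" and g1: "g1 \<le> 2*m1" and g2: "- int m2 < g2" "g2 \<le> int m2"
  defines "h1 \<equiv> pi/(2*m1)" and "h2 \<equiv> pi/(2*m2)"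
  shows "bas (g1, g2) \<phi> \<theta> = (\<Sum>a<4*m1. \<Sum>b<4*m2.
     (2 / (16 * real m1 * real m2)) * complex_of_real (ev_ind a b) *
     complex_of_real (Re (DK (2*m1) (\<phi> - real a * h1))) * DK m2 (\<theta> - real b * h2) *
     bas (g1, g2) (real a * h1) (real b * h2))"
proof -
  define \<alpha> where "\<alpha> a = complex_of_real (cos (real g1 * (real a * h1)) * Re (DK (2*m1) (\<phi> - real a * h1)))" for a :: nat
  define \<beta> where "\<beta> b = cis (of_int g2 * real b * h2) * DK m2 (\<theta> - real b * h2)" for b :: nat
  define c where "c = 1 / (16 * real m1 * real m2)"
  have sa: "(\<Sum>a<4*m1. \<alpha> a) = of_real (real (4*m1) * cos (real g1 * \<phi>))"
    using I1[OF m1 g1, of \<phi>] unfolding \<alpha>_def h1_def of_real_sum[symmetric] by simp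
  have sb: "(\<Sum>b<4*m2. \<beta> b) = of_nat (4*m2) * cis (of_int g2 * \<theta>)"
    using I2[OF m2 g2, of \<theta>] unfolding \<beta>_def h2_def by simp
  have sc: "(\<Sum>b<4*m2. (-1)^b * \<beta> b) = 0"
    using I3[OF m2 g2, of \<theta>] unfolding \<beta>_def h2_def by (simp add: mult.assoc)
  have "(\<Sum>a<4*m1. \<Sum>b<4*m2.
     (2 / (16 * real m1 * real m2)) * complex_of_real (ev_ind a b) *
     complex_of_real (Re (DK (2*m1) (\<phi> - real a * h1))) * DK m2 (\<theta> - real b * h2) *
     bas (g1, g2) (real a * h1) (real b * h2))
   = (\<Sum>a<4*m1. \<Sum>b<4*m2. of_real c * (\<alpha> a * \<beta> b + ((-1)^a * \<alpha> a) * ((-1)^b * \<beta> b)))"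
  proof (intro sum.cong refl)
    fix a b :: nat
    have t: "complex_of_real (Re (DK (2*m1) (\<phi> - real a * h1))) * DK m2 (\<theta> - real b * h2) *
     bas (g1, g2) (real a * h1) (real b * h2) = \<alpha> a * \<beta> b"
      unfolding bas_def exp_cis by (simp add: \<alpha>_def \<beta>_def mult_ac)
    have aux: "(2 / (16 * real m1 * real m2)) * complex_of_real (ev_ind a b) * X = complex_of_real c * (1 + (-1)^a * (-1)^b) * X" for X :: complex
      unfolding ev_ind2[symmetric] by (simp add: c_def)
    show "(2 / (16 * real m1 * real m2)) * complex_of_real (ev_ind a b) *
     complex_of_real (Re (DK (2*m1) (\<phi> - real a * h1))) * DK m2 (\<theta> - real b * h2) *
     bas (g1, g2) (real a * h1) (real b * h2) =
     of_real c * (\<alpha> a * \<beta> b + ((-1)^a * \<alpha> a) * ((-1)^b * \<beta> b))"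
    proof -
      have "(2 / (16 * real m1 * real m2)) * complex_of_real (ev_ind a b) *
     complex_of_real (Re (DK (2*m1) (\<phi> - real a * h1))) * DK m2 (\<theta> - real b * h2) *
     bas (g1, g2) (real a * h1) (real b * h2) = (2 / (16 * real m1 * real m2)) * complex_of_real (ev_ind a b) *
     (complex_of_real (Re (DK (2*m1) (\<phi> - real a * h1))) * DK m2 (\<theta> - real b * h2) *
     bas (g1, g2) (real a * h1) (real b * h2))" by (simp only: mult.assoc)
      also have "\<dots> = complex_of_real c * (1 + (-1)^a * (-1)^b) * (\<alpha> a * \<beta> b)"
        by (simp only: aux t)
      also have "\<dots> = of_real c * (\<alpha> a * \<beta> b + ((-1)^a * \<alpha> a) * ((-1)^b * \<beta> b))"
        by (simp add: algebra_simps)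
      finally show ?thesis .
    qed
  qed
  also have "\<dots> = of_real c * ((\<Sum>a<4*m1. \<alpha> a) * (\<Sum>b<4*m2. \<beta> b) +
      (\<Sum>a<4*m1. (-1)^a * \<alpha> a) * (\<Sum>b<4*m2. (-1)^b * \<beta> b))"
  proof -
    have p1: "(\<Sum>a<4*m1. \<alpha> a) * (\<Sum>b<4*m2. \<beta> b) = (\<Sum>a<4*m1. \<Sum>b<4*m2. \<alpha> a * \<beta> b)"
      by (rule sum_product)
    have p2: "(\<Sum>a<4*m1. (-1)^a * \<alpha> a) * (\<Sum>b<4*m2. (-1)^b * \<beta> b) =
       (\<Sum>a<4*m1. \<Sum>b<4*m2. ((-1)^a * \<alpha> a) * ((-1)^b * \<beta> b))"
      by (rule sum_product)
    show ?thesis unfolding p1 p2 by (simp only: distrib_left sum.distrib sum_distrib_left)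
  qed
  also have "\<dots> = bas (g1, g2) \<phi> \<theta>"
    unfolding sa sb sc bas_def exp_cis using m1 m2 by (simp add: c_def field_simps)
  finally show ?thesis ..
qed

lemma bas_per1: "bas g (\<phi> + 2 * pi * of_int k) \<theta> = bas g \<phi> \<theta>"
proof -
  have "real (fst g) * (\<phi> + 2 * pi * of_int k) = real (fst g) * \<phi> + (2*pi) * of_int (int (fst g) * k)"
    by (simp add: algebra_simps)
  hence "cos (real (fst g) * (\<phi> + 2 * pi * of_int k)) = cos (real (fst g) * \<phi> + (2*pi) * of_int (int (fst g) * k))"
    by simp
  also have "\<dots> = cos (real (fst g) * \<phi>)" by (simp only: cos_add cos_int_2pin sin_int_2pin) 
  finally show ?thesis by (simp add: bas_def)
qed
lemma bas_per2: "bas g \<phi> (\<theta> + 2 * pi * of_int k) = bas g \<phi> \<theta>"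
proof -
  have "cis (of_int (snd g) * (\<theta> + 2 * pi * of_int k)) = cis (of_int (snd g) * \<theta>) * cis (2 * pi * of_int (snd g * k))"
    by (simp add: cis_mult algebra_simps)
  also have "cis (2 * pi * of_int (snd g * k)) = 1" by (rule cis_multiple_2pi) simp
  finally show ?thesis unfolding bas_def exp_cis by simp
qed

lemma bas_shift:
  assumes "even (int (fst g) + snd g)"
  shows "bas g (\<phi> - pi) (\<theta> - pi) = bas g \<phi> \<theta>"
proof -
  from assms obtain k where k0: "int (fst g) + snd g = 2 * k" by (rule evenE)
  have kr: "real_of_int (snd g) = 2 * of_int k - real (fst g)"
  proof -
    have "real_of_int (int (fst g) + snd g) = real_of_int (2 * k)" using k0 by (simp only:)
    thus ?thesis by simp
  qed
  have c: "cos (real (fst g) * (\<phi> - pi)) = (-1) ^ fst g * cos (real (fst g) * \<phi>)"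
  proof -
    have "cos (real (fst g) * (\<phi> - pi)) = cos (real (fst g) * \<phi> - real (fst g) * pi)" by (simp add: algebra_simps)
    also have "\<dots> = (-1) ^ fst g * cos (real (fst g) * \<phi>)" by (simp add: cos_diff)
    finally show ?thesis .
  qed
  have s: "cis (of_int (snd g) * (\<theta> - pi)) = (-1) ^ fst g * cis (of_int (snd g) * \<theta>)"
  proof -
    have "of_int (snd g) * (\<theta> - pi) = of_int (snd g) * \<theta> + real (fst g) * pi + 2 * pi * of_int (- k)"
      unfolding kr by (simp add: algebra_simps)
    hence "cis (of_int (snd g) * (\<theta> - pi)) = cis (of_int (snd g) * \<theta>) * cis (real (fst g) * pi) * cis (2 * pi * of_int (- k))"
      by (simp only: cis_mult)
    also have "cis (2 * pi * of_int (- k)) = 1" by (rule cis_multiple_2pi) simp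
    also have "cis (real (fst g) * pi) = (-1) ^ fst g" by (simp add: cis.ctr complex_eq_iff)
    finally show ?thesis by simp
  qed
  have "bas g (\<phi> - pi) (\<theta> - pi) = complex_of_real (cos (real (fst g) * (\<phi> - pi))) * cis (of_int (snd g) * (\<theta> - pi))"
    unfolding bas_def exp_cis by simp
  also have "\<dots> = ((-1) ^ fst g * (-1) ^ fst g) * (complex_of_real (cos (real (fst g) * \<phi>)) * cis (of_int (snd g) * \<theta>))"
    unfolding c s by (simp add: mult_ac)
  also have "(-1) ^ fst g * (-1) ^ fst g = (1::complex)" by (simp add: power_add[symmetric])
  finally show ?thesis unfolding bas_def exp_cis by simp
qed
lemma reduce:
  fixes G :: "int \<Rightarrow> int \<Rightarrow> 'a" and m1 m2 :: nat
  assumes m1: "m1 > 0" and m2: "m2 > 0"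
    and Y1: "\<And>a b. G (- a) b = G a b"
    and Y2: "\<And>a b k. G (a + 4 * int m1 * k) b = G a b"
    and Y3: "\<And>a b k. G a (b + 4 * int m2 * k) = G a b"
    and Y4: "\<And>a b. G (a - 2 * int m1) (b - 2 * int m2) = G a b"
    and ev: "even (a + b)"
  shows "\<exists>i1 i2. (i1, i2) \<in> node_idx m1 m2 \<and> G a b = G (int i1) i2"
proof -
  define M1 where "M1 = int m1"
  define M2 where "M2 = int m2"
  have M1: "M1 > 0" and M2: "M2 > 0" using m1 m2 by (auto simp: M1_def M2_def)
  define a1 where "a1 = a mod (4 * M1)"
  define k1 where "k1 = a div (4 * M1)"
  have a1: "0 \<le> a1" "a1 < 4 * M1" using M1 by (auto simp: a1_def)
  have ak: "a = a1 + 4 * M1 * k1" by (simp add: a1_def k1_def)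
  have G1: "G a b = G a1 b" using Y2[where a=a1 and b=b and k=k1] ak by (simp add: M1_def)
  have e1: "even (a1 + b)"
  proof -
    define P where "P = M1 * k1"
    have "a = a1 + 4 * P" using ak by (simp add: P_def)
    hence "a + b = (a1 + b) + 2 * (2 * P)" by simp
    thus ?thesis using ev by (metis even_add even_mult_iff even_numeral)
  qed
  define a2 where "a2 = (if a1 \<le> 2 * M1 then a1 else 4 * M1 - a1)"
  have a2: "0 \<le> a2" "a2 \<le> 2 * M1" using a1 by (auto simp: a2_def)
  have G2: "G a1 b = G a2 b"
  proof (cases "a1 \<le> 2 * M1")
    case False
    have "G (4 * M1 - a1) b = G (- a1 + 4 * int m1 * 1) b" by (simp add: M1_def)
    also have "\<dots> = G (- a1) b" by (rule Y2)
    also have "\<dots> = G a1 b" by (rule Y1)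
    finally show ?thesis using False by (simp add: a2_def)
  qed (simp add: a2_def)
  have e2: "even (a2 + b)" using e1 by (auto simp: a2_def)
  define a3 where "a3 = (if a2 \<le> M1 then a2 else 2 * M1 - a2)"
  define b3 where "b3 = (if a2 \<le> M1 then b else b - 2 * M2)"
  have a3: "0 \<le> a3" "a3 \<le> M1" using a2 by (auto simp: a3_def)
  have G3: "G a2 b = G a3 b3"
  proof (cases "a2 \<le> M1")
    case False
    have "G a2 b = G (a2 - 2 * int m1) (b - 2 * int m2)" by (rule Y4[symmetric])
    also have "\<dots> = G (- (a2 - 2 * int m1)) (b - 2 * int m2)" by (rule Y1[symmetric])
    finally show ?thesis using False by (simp add: a3_def b3_def M1_def M2_def)
  qed (simp add: a3_def b3_def)
  have e3: "even (a3 + b3)" using e2 by (auto simp: a3_def b3_def)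
  define k4 where "k4 = (b3 + 2 * M2 - 1) div (4 * M2)"
  define b4 where "b4 = (b3 + 2 * M2 - 1) mod (4 * M2) - 2 * M2 + 1"
  have "(b3 + 2 * M2 - 1) mod (4 * M2) < 4 * M2" "0 \<le> (b3 + 2 * M2 - 1) mod (4 * M2)" using M2 by auto
  hence b4: "- 2 * M2 < b4" "b4 \<le> 2 * M2" unfolding b4_def by linarith+
  have bk: "b3 = b4 + 4 * M2 * k4"
  proof -
    have "b3 + 2 * M2 - 1 = (b3 + 2 * M2 - 1) mod (4 * M2) + 4 * M2 * k4"
      by (simp add: k4_def)
    thus ?thesis by (simp add: b4_def)
  qed
  have G4: "G a3 b3 = G a3 b4" using Y3[where a=a3 and b=b4 and k=k4] bk by (simp add: M2_def)
  have e4: "even (a3 + b4)"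
  proof -
    define P where "P = M2 * k4"
    have "b3 = b4 + 4 * P" using bk by (simp add: P_def)
    hence "a3 + b3 = (a3 + b4) + 2 * (2 * P)" by simp
    thus ?thesis using e3 by (metis even_add even_mult_iff even_numeral)
  qed
  show ?thesis
  proof (cases "a3 = M1 \<and> 0 < b4")
    case True
    have "G a3 b4 = G (a3 - 2 * int m1) (b4 - 2 * int m2)" by (rule Y4[symmetric])
    also have "\<dots> = G (- (a3 - 2 * int m1)) (b4 - 2 * int m2)" by (rule Y1[symmetric])
    also have "\<dots> = G (int m1) (b4 - 2 * M2)" using True by (simp add: M1_def M2_def)
    finally have "G a b = G (int m1) (b4 - 2 * M2)" using G1 G2 G3 G4 by simp
    moreover have "(m1, b4 - 2 * M2) \<in> node_idx m1 m2"
      unfolding node_idx_def using True b4 e4 by (auto simp: M1_def M2_def)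
    ultimately show ?thesis by blast
  next
    case False
    have "G a b = G (int (nat a3)) b4" using G1 G2 G3 G4 a3 by simp
    moreover have "(nat a3, b4) \<in> node_idx m1 m2"
      proof -
      have na: "int (nat a3) = a3" using a3 by simp
      show ?thesis unfolding node_idx_def mem_Collect_eq case_prod_conv na using False b4 e4 a3 by (auto simp: M1_def M2_def)
    qed
    ultimately show ?thesis by blast
  qed
qed

lemma bas_neg: "bas g (- \<phi>) \<theta> = bas g \<phi> \<theta>"
  by (simp add: bas_def)

lemma ln2_ge: "1/2 \<le> ln (2::real)"
proof -
  have "ln (1/2::real) \<le> 1/2 - 1" by (rule ln_le_minus_one) simp
  moreover have "ln (1/2::real) = - ln 2" by (simp add: ln_div)
  ultimately show ?thesis by simp
qed

lemma logb:
  assumes "1 \<le> m"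
  shows "4 + 2 * ln (real (4 * m)) \<le> 20 * ln (real m + 1)"
proof -
  have l4: "ln (real (4 * m)) = 2 * ln 2 + ln (real m)"
  proof -
    have "ln (real (4 * m)) = ln 4 + ln (real m)" using assms by (simp add: ln_mult)
    moreover have "ln (4::real) = ln 2 + ln 2" using ln_mult[of "2::real" 2] by simp
    ultimately show ?thesis by simp
  qed
  have a: "ln (real m) \<le> ln (real m + 1)" using assms by (intro ln_mono) auto
  have b: "ln 2 \<le> ln (real m + 1)" using assms by (intro ln_mono) auto
  show ?thesis using l4 a b ln2_ge by linarith
qed

lemma main:
  fixes m1 m2 :: nat
  assumes m1: "1 \<le> m1" and m2: "1 \<le> m2" and fb: "sup_norm_le f 1" and pP: "p \<in> Pi_sq m1 m2"
    and interp: "\<forall>(i1, i2) \<in> node_idx m1 m2.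
             p (node_r m1 i1) (node_theta m2 i2) = f (node_r m1 i1) (node_theta m2 i2)"
  shows "sup_norm_le p (800 * ln (real m1 + 1) * ln (real m2 + 1))"
proof -
  have m1p: "m1 > 0" and m2p: "m2 > 0" using m1 m2 by auto
  obtain c where pc: "p = (\<lambda>r \<theta>. \<Sum>g\<in>Gamma_sq m1 m2. c g * Xfun g r \<theta>)"
    using pP unfolding Pi_sq_def by blast
  define \<Gamma> where "\<Gamma> = Gamma_sq m1 m2"
  have finG: "finite \<Gamma>"
  proof (rule finite_subset)
    show "\<Gamma> \<subseteq> {0..2*m1} \<times> {- int m2 <.. int m2}" by (auto simp: \<Gamma>_def Gamma_sq_def)
  qed simp
  define Q where "Q \<phi> \<theta> = (\<Sum>g\<in>\<Gamma>. c g * bas g \<phi> \<theta>)" for \<phi> \<theta>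
  have pQ: "p r \<theta> = Q (arccos r) \<theta>" for r \<theta>
    unfolding pc Q_def \<Gamma>_def by (intro sum.cong refl) (simp add: Xfun_def cheb_def bas_def)
  define h1 where "h1 = pi / (2 * real m1)"
  define h2 where "h2 = pi / (2 * real m2)"
  define Gv where "Gv a b = Q (of_int a * h1) (of_int b * h2)" for a b :: int
  have Y1: "Gv (- a) b = Gv a b" for a b
  proof -
    have "of_int (- a) * h1 = - (of_int a * h1)" by simp
    thus ?thesis unfolding Gv_def Q_def by (simp only: bas_neg)
  qed
  have Y2: "Gv (a + 4 * int m1 * k) b = Gv a b" for a b k
  proof -
    have "of_int (a + 4 * int m1 * k) * h1 = of_int a * h1 + 2 * pi * of_int k"
      using m1p by (simp add: h1_def field_simps)
    thus ?thesis unfolding Gv_def Q_def by (simp only: bas_per1)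
  qed
  have Y3: "Gv a (b + 4 * int m2 * k) = Gv a b" for a b k
  proof -
    have "of_int (b + 4 * int m2 * k) * h2 = of_int b * h2 + 2 * pi * of_int k"
      using m2p by (simp add: h2_def field_simps)
    thus ?thesis unfolding Gv_def Q_def by (simp only: bas_per2)
  qed
  have Y4: "Gv (a - 2 * int m1) (b - 2 * int m2) = Gv a b" for a b
  proof -
    have e1: "of_int (a - 2 * int m1) * h1 = of_int a * h1 - pi"
      using m1p by (simp add: h1_def field_simps)
    have e2: "of_int (b - 2 * int m2) * h2 = of_int b * h2 - pi"
      using m2p by (simp add: h2_def field_simps)
    show ?thesis unfolding Gv_def Q_def e1 e2
    proof (intro sum.cong refl)
      fix g assume "g \<in> \<Gamma>"
      hence "even (int (fst g) + snd g)" by (auto simp: \<Gamma>_def Gamma_sq_def)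
      thus "c g * bas g (of_int a * h1 - pi) (of_int b * h2 - pi) = c g * bas g (of_int a * h1) (of_int b * h2)"
        by (simp add: bas_shift)
    qed
  qed
  have gb: "cmod (Gv a b) \<le> 1" if ev: "even (a + b)" for a b
  proof -
    obtain i1 i2 where node: "(i1, i2) \<in> node_idx m1 m2" and eq: "Gv a b = Gv (int i1) i2"
      using reduce[of m1 m2 Gv a b, OF m1p m2p Y1 Y2 Y3 Y4 ev] by blast
    have i1: "i1 \<le> m1" and i2: "- 2 * int m2 < i2" "i2 \<le> 2 * int m2"
      using node by (auto simp: node_idx_def)
    define x where "x = real i1 * pi / (2 * real m1)"
    have x: "0 \<le> x" "x \<le> pi / 2"
    proof -
      show "0 \<le> x" by (simp add: x_def)
      have "real i1 / real m1 \<le> 1" using i1 m1p by simp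
      hence "real i1 / real m1 * (pi/2) \<le> 1 * (pi/2)" by (intro mult_right_mono) auto
      thus "x \<le> pi / 2" by (simp add: x_def)
    qed
    have nr: "node_r m1 i1 = cos x" by (simp add: node_r_def x_def)
    have ac: "arccos (node_r m1 i1) = of_int (int i1) * h1"
    proof -
      have "of_int (int i1) * h1 = x" by (simp add: x_def h1_def)
      moreover have "arccos (cos x) = x" by (rule arccos_cos) (use x in auto)
      ultimately show ?thesis unfolding nr by simp
    qed
    have nt: "node_theta m2 i2 = of_int i2 * h2" by (simp add: node_theta_def h2_def)
    have "Gv (int i1) i2 = p (node_r m1 i1) (node_theta m2 i2)"
      unfolding pQ ac nt Gv_def ..
    also have "\<dots> = f (node_r m1 i1) (node_theta m2 i2)" using interp node by auto
    finally have gf: "Gv a b = f (node_r m1 i1) (node_theta m2 i2)" using eq by simp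
    have "(node_r m1 i1, node_theta m2 i2) \<in> polar_dom"
    proof -
      have "0 \<le> node_r m1 i1" unfolding nr by (rule cos_ge_zero) (use x in auto)
      moreover have "node_r m1 i1 \<le> 1" by (simp add: node_r_def)
      moreover have "- pi \<le> node_theta m2 i2" "node_theta m2 i2 \<le> pi"
      proof -
        have "- 2 * real m2 \<le> of_int i2" "of_int i2 \<le> 2 * real m2" using i2 by linarith+
        hence "- 1 \<le> of_int i2 / (2 * real m2)" "of_int i2 / (2 * real m2) \<le> 1"
          using m2p by (auto simp: field_simps)
        hence "- 1 * pi \<le> of_int i2 / (2 * real m2) * pi" "of_int i2 / (2 * real m2) * pi \<le> 1 * pi"
          by (intro mult_right_mono; simp)+
        thus "- pi \<le> node_theta m2 i2" "node_theta m2 i2 \<le> pi" by (simp_all add: node_theta_def)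
      qed
      ultimately show ?thesis by (simp add: polar_dom_def)
    qed
    thus ?thesis using fb gf unfolding sup_norm_le_def by auto
  qed
  define W where "W \<phi> \<theta> a b = (2 / (16 * real m1 * real m2)) * complex_of_real (ev_ind a b) *
     complex_of_real (Re (DK (2*m1) (\<phi> - real a * h1))) * DK m2 (\<theta> - real b * h2)" for \<phi> \<theta> a b
  have rep: "Q \<phi> \<theta> = (\<Sum>a<4*m1. \<Sum>b<4*m2. W \<phi> \<theta> a b * Gv (int a) (int b))" for \<phi> \<theta>
  proof -
    have "Q \<phi> \<theta> = (\<Sum>g\<in>\<Gamma>. c g * (\<Sum>a<4*m1. \<Sum>b<4*m2. W \<phi> \<theta> a b * bas g (real a * h1) (real b * h2)))"
      unfolding Q_def
    proof (intro sum.cong refl)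
      fix g assume g: "g \<in> \<Gamma>"
      obtain g1 g2 where gg: "g = (g1, g2)" by (cases g)
      have c: "g1 \<le> 2*m1" "- int m2 < g2" "g2 \<le> int m2" using g by (auto simp: gg \<Gamma>_def Gamma_sq_def)
      show "c g * bas g \<phi> \<theta> = c g * (\<Sum>a<4*m1. \<Sum>b<4*m2. W \<phi> \<theta> a b * bas g (real a * h1) (real b * h2))"
      proof -
        have e: "h1 = pi / real (2*m1)" "h2 = pi / real (2*m2)" by (simp_all add: h1_def h2_def)
        show ?thesis unfolding gg W_def e by (subst rep_bas[OF m1p m2p c]) (rule refl)
      qed
    qed
    also have "\<dots> = (\<Sum>g\<in>\<Gamma>. \<Sum>a<4*m1. \<Sum>b<4*m2. W \<phi> \<theta> a b * (c g * bas g (real a * h1) (real b * h2)))"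
      by (simp add: sum_distrib_left mult_ac)
    also have "\<dots> = (\<Sum>a<4*m1. \<Sum>g\<in>\<Gamma>. \<Sum>b<4*m2. W \<phi> \<theta> a b * (c g * bas g (real a * h1) (real b * h2)))"
      by (rule sum.swap)
    also have "\<dots> = (\<Sum>a<4*m1. \<Sum>b<4*m2. \<Sum>g\<in>\<Gamma>. W \<phi> \<theta> a b * (c g * bas g (real a * h1) (real b * h2)))"
      by (rule sum.cong[OF refl], rule sum.swap)
    also have "\<dots> = (\<Sum>a<4*m1. \<Sum>b<4*m2. W \<phi> \<theta> a b * Gv (int a) (int b))"
      by (simp add: Gv_def Q_def sum_distrib_left)
    finally show ?thesis .
  qed
  define FA where "FA z = \<bar>Re (DK (2*m1) z)\<bar>" for z
  define FB where "FB z = cmod (DK m2 z)" for z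
  have bnd: "cmod (Q \<phi> \<theta>) \<le> 2 * (4 + 2 * ln (real (4*m1))) * (4 + 2 * ln (real (4*m2)))" for \<phi> \<theta>
  proof -
    have "cmod (Q \<phi> \<theta>) \<le> (\<Sum>a<4*m1. \<Sum>b<4*m2. cmod (W \<phi> \<theta> a b * Gv (int a) (int b)))"
      unfolding rep by (rule order_trans[OF norm_sum sum_mono]) (rule norm_sum)
    also have "\<dots> \<le> (\<Sum>a<4*m1. \<Sum>b<4*m2. (2 / (16 * real m1 * real m2)) * (FA (\<phi> - real a * h1) * FB (\<theta> - real b * h2)))"
    proof (intro sum_mono)
      fix a b
      show "cmod (W \<phi> \<theta> a b * Gv (int a) (int b)) \<le> (2 / (16 * real m1 * real m2)) * (FA (\<phi> - real a * h1) * FB (\<theta> - real b * h2))"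
      proof (cases "even (a + b)")
        case True
        have "cmod (Gv (int a) (int b)) \<le> 1" using True by (intro gb) (simp add: even_add)
        moreover have "cmod (W \<phi> \<theta> a b) = (2 / (16 * real m1 * real m2)) * (FA (\<phi> - real a * h1) * FB (\<theta> - real b * h2))"
        proof -
          have Wf: "W \<phi> \<theta> a b = complex_of_real ((2 / (16 * real m1 * real m2)) * ev_ind a b * Re (DK (2*m1) (\<phi> - real a * h1))) * DK m2 (\<theta> - real b * h2)"
            by (simp add: W_def)
          show ?thesis unfolding Wf norm_mult norm_of_real abs_mult using True
            by (simp add: ev_ind_def FA_def FB_def)
        qed
        ultimately show ?thesis
          by (metis mult.right_neutral mult_left_mono norm_ge_zero norm_mult)
      next
        case False
        thus ?thesis by (simp add: W_def ev_ind_def FA_def FB_def)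
      qed
    qed
    also have "\<dots> = (2 / (16 * real m1 * real m2)) * ((\<Sum>a<4*m1. FA (\<phi> - real a * h1)) * (\<Sum>b<4*m2. FB (\<theta> - real b * h2)))"
      by (simp only: sum_product) (simp only: sum_distrib_left)
    also have "\<dots> \<le> (2 / (16 * real m1 * real m2)) * ((real (4*m1) * (4 + 2 * ln (real (4*m1)))) * (real (4*m2) * (4 + 2 * ln (real (4*m2)))))"
    proof (intro mult_left_mono mult_mono)
      have hh1: "h1 = 2 * pi / real (4*m1)" by (simp add: h1_def)
      show "(\<Sum>a<4*m1. FA (\<phi> - real a * h1)) \<le> real (4*m1) * (4 + 2 * ln (real (4*m1)))"
        unfolding hh1
      proof (rule leb1)
        show "2 \<le> 4*m1" using m1 by simp
        fix z
        show "0 \<le> FA z" by (simp add: FA_def)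
        show "FA z \<le> real (4*m1)" using DK_le_card[of "2*m1" z] abs_Re_le_cmod[of "DK (2*m1) z"]
          by (simp add: FA_def)
        assume "sin (z/2) \<noteq> 0"
        thus "FA z \<le> 1 / \<bar>sin (z/2)\<bar>" using DK_le_sin[of z "2*m1"] abs_Re_le_cmod[of "DK (2*m1) z"]
          by (simp add: FA_def)
      qed
      have hh2: "h2 = 2 * pi / real (4*m2)" by (simp add: h2_def)
      show "(\<Sum>b<4*m2. FB (\<theta> - real b * h2)) \<le> real (4*m2) * (4 + 2 * ln (real (4*m2)))"
        unfolding hh2
      proof (rule leb1)
        show "2 \<le> 4*m2" using m2 by simp
        fix z
        show "0 \<le> FB z" by (simp add: FB_def)
        show "FB z \<le> real (4*m2)" using DK_le_card[of m2 z] by (simp add: FB_def)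
        assume "sin (z/2) \<noteq> 0"
        thus "FB z \<le> 1 / \<bar>sin (z/2)\<bar>" using DK_le_sin[of z m2] by (simp add: FB_def)
      qed
      show "0 \<le> (\<Sum>b<4*m2. FB (\<theta> - real b * h2))" by (intro sum_nonneg) (simp add: FB_def)
      show "0 \<le> real (4*m1) * (4 + 2 * ln (real (4*m1)))" using m1 by (intro mult_nonneg_nonneg) auto
    qed simp
    also have "\<dots> = 2 * (4 + 2 * ln (real (4*m1))) * (4 + 2 * ln (real (4*m2)))"
      using m1p m2p by (simp add: field_simps)
    finally show ?thesis .
  qed
  show ?thesis
    unfolding sup_norm_le_def
  proof (clarify)
    fix r \<theta> assume "(r, \<theta>) \<in> polar_dom"
    have "cmod (p r \<theta>) \<le> 2 * (4 + 2 * ln (real (4*m1))) * (4 + 2 * ln (real (4*m2)))"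
      unfolding pQ by (rule bnd)
    also have "\<dots> \<le> 2 * (20 * ln (real m1 + 1)) * (20 * ln (real m2 + 1))"
    proof (intro mult_mono mult_left_mono logb m1 m2)
      show "0 \<le> 4 + 2 * ln (real (4*m2))" using m2 by (intro add_nonneg_nonneg) auto
      show "0 \<le> 2 * (20 * ln (real m1 + 1))" by simp
      show "0 \<le> 4 + 2 * ln (real (4*m1))" using m1 by (intro add_nonneg_nonneg) auto
    qed simp_all
    also have "\<dots> = 800 * ln (real m1 + 1) * ln (real m2 + 1)" by simp
    finally show "cmod (p r \<theta>) \<le> 800 * ln (real m1 + 1) * ln (real m2 + 1)" .
  qed
qed

theorem theorem8p2:
  shows "\<exists>C > 0. \<forall>m1 m2 :: nat. m1 \<ge> 1 \<longrightarrow> m2 \<ge> 1 \<longrightarrow>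
     (\<forall>f \<in> C_disk. sup_norm_le f 1 \<longrightarrow>
       (\<forall>p \<in> Pi_sq m1 m2.
          (\<forall>(i1, i2) \<in> node_idx m1 m2.
             p (node_r m1 i1) (node_theta m2 i2) = f (node_r m1 i1) (node_theta m2 i2)) \<longrightarrow>
          sup_norm_le p (C * ln (real m1 + 1) * ln (real m2 + 1))))"
  by (rule exI[of _ 800]) (auto intro: main)

end
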